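(* Let $k_1,k_2\in\mathbb{Z}_{>0}$, $\theta_1=1/k_1$, $\theta_2=1/k_2$, and let $d\mu_1,d\mu_2$ be non-negative measures on $\mathbb{R}_+$ for which all the moments below are finite. Let $\langle\cdot,\cdot\rangle$ be the bilinear form $\langle f(x),g(y)\rangle=\int_{\mathbb{R}_+\times\mathbb{R}_+}\frac{f(x)g(y)}{x+y}\,d\mu_1(x)\,d\mu_2(y)$, and let $\{P_n(x^{\theta_1}),Q_n(y^{\theta_2})\}_{n\ge0}$ be the monic two-parameter Cauchy bi-orthogonal polynomials, i.e. $P_n$ (resp. $Q_n$) is a monic polynomial of degree $n$ in $x^{\theta_1}$ (resp. $y^{\theta_2}$) and $\langle P_n(x^{\theta_1}),Q_m(y^{\theta_2})\rangle=h_n\delta_{n,m}$ with $h_n>0$. Then for each $n\ge0$ the polynomials $P_n$ satisfy the $(k_1+k_2+2)$-term recurrence relation $$x\left(P_{n+1}(x^{\theta_1})+a_nP_n(x^{\theta_1})\right)=\sum_{\alpha=n-k_2}^{n+k_1+1}\eta_{n,\alpha}P_\alpha(x^{\theta_1}),$$ where $$a_n=-\frac{\int_{\mathbb{R}_+}P_{n+1}(x^{\theta_1})\,d\mu_1(x)}{\int_{\mathbb{R}_+}P_{n}(x^{\theta_1})\,d\mu_1(x)},\qquad \eta_{n,\alpha}=\frac{\langle x(P_{n+1}(x^{\theta_1})+a_nP_n(x^{\theta_1})),\, Q_\alpha(y^{\theta_2})\rangle}{\langle P_\alpha(x^{\theta_1}), Q_\alpha(y^{\theta_2})\rangle}$$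 (and $P_\alpha:=0$ for $\alpha<0$).
   Context: Moments are $m_{i,j}=\langle x^i,y^j\rangle$ for real $i,j\ge0$. The polynomials exist and are unique provided $\tau_n=\det(m_{(k-1)\theta_1,(l-1)\theta_2})_{k,l=1}^n\neq0$ for all $n$, which is assumed; then $h_n=\tau_{n+1}/\tau_n$. Quantities appearing in denominators (such as $\int P_n\,d\mu_1$) are assumed nonzero so that the coefficients are defined. *)

theory Defs
  imports "HOL-Analysis.Analysis" "HOL-Computational_Algebra.Polynomial"
begin

definition cauchy_form :: "real measure \<Rightarrow> real measure \<Rightarrow> (real \<Rightarrow> real) \<Rightarrow> (real \<Rightarrow> real) \<Rightarrow> real" where
  "cauchy_form M1 M2 f g = (\<integral>z. f (fst z) * g (snd z) / (fst z + snd z) \<partial>(M1 \<Otimes>\<^sub>M M2))"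

end

theory Submission imports Defs begin

lemma poly_meas[measurable]:
  fixes f :: "'a \<Rightarrow> real"
  assumes [measurable]: "f \<in> borel_measurable M"
  shows "(\<lambda>x. poly p (f x)) \<in> borel_measurable M"
  unfolding poly_altdef by measurable

lemma basis_expand:
  fixes P :: "nat \<Rightarrow> 'a::field poly"
  assumes deg: "\<And>m. degree (P m) = m" and mon: "\<And>m. lead_coeff (P m) = 1"
  shows "degree S \<le> N \<Longrightarrow> \<exists>c. S = (\<Sum>\<alpha>\<le>N. smult (c \<alpha>) (P \<alpha>))"
proof (induction N arbitrary: S)
  case 0
  have "P 0 = [:1:]" using deg[of 0] mon[of 0]
    by (elim degree_eq_zeroE) simp
  moreover have "S = [:coeff S 0:]" using 0 by (auto elim!: degree_eq_zeroE)
  ultimately show ?case by (intro exI[of _ "\<lambda>_. coeff S 0"]) simp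
next
  case (Suc N)
  define S' where "S' = S - smult (coeff S (Suc N)) (P (Suc N))"
  have "degree S' \<le> N"
  proof -
    have d: "degree S' \<le> Suc N" unfolding S'_def using Suc.prems deg
      by (metis degree_diff_le degree_smult_le le_trans)
    have "coeff S' (Suc N) = 0" unfolding S'_def using mon[of "Suc N"] deg[of "Suc N"] by simp
    then show ?thesis using d
      by (metis Suc_le_eq coeff_0_degree_minus_1 diff_Suc_1 le_antisym not_less_eq_eq degree_0 zero_le)
  qed
  then obtain c where c: "S' = (\<Sum>\<alpha>\<le>N. smult (c \<alpha>) (P \<alpha>))" using Suc.IH by blast
  show ?case
    apply (rule exI[of _ "c(Suc N := coeff S (Suc N))"])
    using c unfolding S'_def by (simp add: algebra_simps)
qed

theorem proposition2p1:
  fixes k1 k2 :: nat and M1 M2 :: "real measure" and P Q :: "nat \<Rightarrow> real poly" and n :: nat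
  defines "\<theta>1 \<equiv> 1 / real k1" and "\<theta>2 \<equiv> 1 / real k2"
  defines "a \<equiv> - (\<integral>x. poly (P (Suc n)) (x powr \<theta>1) \<partial>M1) / (\<integral>x. poly (P n) (x powr \<theta>1) \<partial>M1)"
  defines "\<eta> \<equiv> (\<lambda>\<alpha>::nat.
      cauchy_form M1 M2 (\<lambda>x. x * (poly (P (Suc n)) (x powr \<theta>1) + a * poly (P n) (x powr \<theta>1)))
                        (\<lambda>y. poly (Q \<alpha>) (y powr \<theta>2))
    / cauchy_form M1 M2 (\<lambda>x. poly (P \<alpha>) (x powr \<theta>1)) (\<lambda>y. poly (Q \<alpha>) (y powr \<theta>2)))"
  assumes k1_pos: "k1 > 0" and k2_pos: "k2 > 0"
    and M1_borel: "sets M1 = sets borel" and M2_borel: "sets M2 = sets borel"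
    and M1_sf: "sigma_finite_measure M1" and M2_sf: "sigma_finite_measure M2"
    and M1_supp: "emeasure M1 {x. x < 0} = 0" and M2_supp: "emeasure M2 {y. y < 0} = 0"
    and origin_null: "emeasure (M1 \<Otimes>\<^sub>M M2) {(0, 0)} = 0"
    and moments: "\<And>i j::nat. integrable (M1 \<Otimes>\<^sub>M M2)
        (\<lambda>z. (fst z powr \<theta>1) ^ i * (snd z powr \<theta>2) ^ j / (fst z + snd z))"
    and moments1: "\<And>i::nat. integrable M1 (\<lambda>x. (x powr \<theta>1) ^ i)"
    and P_deg: "\<And>m. degree (P m) = m" and P_monic: "\<And>m. lead_coeff (P m) = 1"
    and Q_deg: "\<And>m. degree (Q m) = m" and Q_monic: "\<And>m. lead_coeff (Q m) = 1"
    and biorth: "\<And>m l. m \<noteq> l \<Longrightarrow>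
        cauchy_form M1 M2 (\<lambda>x. poly (P m) (x powr \<theta>1)) (\<lambda>y. poly (Q l) (y powr \<theta>2)) = 0"
    and h_pos: "\<And>m. cauchy_form M1 M2 (\<lambda>x. poly (P m) (x powr \<theta>1)) (\<lambda>y. poly (Q m) (y powr \<theta>2)) > 0"
    and denom_nz: "(\<integral>x. poly (P n) (x powr \<theta>1) \<partial>M1) \<noteq> 0"
  shows "\<forall>x::real. x \<ge> 0 \<longrightarrow>
    x * (poly (P (Suc n)) (x powr \<theta>1) + a * poly (P n) (x powr \<theta>1))
      = (\<Sum>\<alpha> = n - k2 .. n + k1 + 1. \<eta> \<alpha> * poly (P \<alpha>) (x powr \<theta>1))"
proof -
  interpret M1s: sigma_finite_measure M1 by (rule M1_sf)
  interpret M2s: sigma_finite_measure M2 by (rule M2_sf)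
  interpret PS: pair_sigma_finite M1 M2 ..
  note [measurable_cong] = M1_borel M2_borel
  have sp1: "space M1 = UNIV" using sets_eq_imp_space_eq[OF M1_borel] by simp
  have sp2: "space M2 = UNIV" using sets_eq_imp_space_eq[OF M2_borel] by simp
  have spP: "space (M1 \<Otimes>\<^sub>M M2) = UNIV" by (simp add: space_pair_measure sp1 sp2)
  define B where "B p q = cauchy_form M1 M2 (\<lambda>x. poly p (x powr \<theta>1)) (\<lambda>y. poly q (y powr \<theta>2))" for p q
  define F where "F p q = (\<lambda>z::real\<times>real. poly p (fst z powr \<theta>1) * poly q (snd z powr \<theta>2) / (fst z + snd z))" for p q
  have BF: "B p q = integral\<^sup>L (M1 \<Otimes>\<^sub>M M2) (F p q)" for p q
    unfolding B_def F_def cauchy_form_def by simp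
  have Fmeas[measurable]: "F p q \<in> borel_measurable (M1 \<Otimes>\<^sub>M M2)" for p q
    unfolding F_def by measurable
  have intF: "integrable (M1 \<Otimes>\<^sub>M M2) (F p q)" for p q
  proof -
    have "F p q = (\<lambda>z. \<Sum>j\<le>degree q. \<Sum>i\<le>degree p. (coeff p i * coeff q j) *
        ((fst z powr \<theta>1) ^ i * (snd z powr \<theta>2) ^ j / (fst z + snd z)))"
      unfolding F_def poly_altdef
      by (simp add: sum_distrib_left sum_distrib_right sum_divide_distrib mult_ac)
    moreover have "integrable (M1 \<Otimes>\<^sub>M M2) (\<lambda>z. \<Sum>j\<le>degree q. \<Sum>i\<le>degree p. (coeff p i * coeff q j) *
        ((fst z powr \<theta>1) ^ i * (snd z powr \<theta>2) ^ j / (fst z + snd z)))"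
      by (rule Bochner_Integration.integrable_sum, rule Bochner_Integration.integrable_sum, rule integrable_mult_right, rule moments)
    ultimately show ?thesis by simp
  qed
  have int1: "integrable M1 (\<lambda>x. poly p (x powr \<theta>1))" for p
  proof -
    have "integrable M1 (\<lambda>x. \<Sum>i\<le>degree p. coeff p i * (x powr \<theta>1) ^ i)"
      by (rule Bochner_Integration.integrable_sum, rule integrable_mult_right, rule moments1)
    then show ?thesis unfolding poly_altdef .
  qed
  have B_add1: "B (p1 + p2) q = B p1 q + B p2 q" for p1 p2 q
  proof -
    have "F (p1 + p2) q = (\<lambda>z. F p1 q z + F p2 q z)"
      unfolding F_def by (simp add: algebra_simps add_divide_distrib)
    then show ?thesis unfolding BF using intF by simp
  qed
  have B_smult1: "B (smult c p) q = c * B p q" for c p q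
  proof -
    have "F (smult c p) q = (\<lambda>z. c * F p q z)" unfolding F_def by (simp add: algebra_simps)
    then show ?thesis unfolding BF by simp
  qed
  have B_add2: "B p (q1 + q2) = B p q1 + B p q2" for p q1 q2
  proof -
    have "F p (q1 + q2) = (\<lambda>z. F p q1 z + F p q2 z)"
      unfolding F_def by (simp add: algebra_simps add_divide_distrib)
    then show ?thesis unfolding BF using intF by simp
  qed
  have B_smult2: "B p (smult c q) = c * B p q" for c p q
  proof -
    have "F p (smult c q) = (\<lambda>z. c * F p q z)" unfolding F_def by (simp add: algebra_simps)
    then show ?thesis unfolding BF by simp
  qed
  have B_zero1: "B 0 q = 0" for q unfolding BF F_def by simp
  have B_zero2: "B p 0 = 0" for p unfolding BF F_def by simp
  have B_sum1: "B (\<Sum>\<alpha>\<in>A. smult (c \<alpha>) (P \<alpha>)) q = (\<Sum>\<alpha>\<in>A. c \<alpha> * B (P \<alpha>) q)" if "finite A" for A c q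
    using that by (induction A rule: finite_induct) (simp_all add: B_zero1 B_add1 B_smult1)
  have B_sum2: "B p (\<Sum>\<alpha>\<in>A. smult (c \<alpha>) (Q \<alpha>)) = (\<Sum>\<alpha>\<in>A. c \<alpha> * B p (Q \<alpha>))" if "finite A" for A c p
    using that by (induction A rule: finite_induct) (simp_all add: B_zero2 B_add2 B_smult2)
  define h where "h m = B (P m) (Q m)" for m
  have hpos: "h m > 0" for m unfolding h_def B_def using h_pos .
  have borth: "m \<noteq> l \<Longrightarrow> B (P m) (Q l) = 0" for m l unfolding B_def using biorth .

  have AEpos: "AE z in M1 \<Otimes>\<^sub>M M2. fst z \<ge> 0 \<and> snd z \<ge> 0 \<and> fst z + snd z > 0"
  proof -
    have s1: "{x::real. x < 0} \<in> sets M1" using M1_borel by simp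
    have s2: "{y::real. y < 0} \<in> sets M2" using M2_borel by simp
    have n1: "{x::real. x < 0} \<times> UNIV \<in> null_sets (M1 \<Otimes>\<^sub>M M2)"
    proof -
      have "UNIV \<in> sets M2" using sets.top[of M2] sp2 by simp
      then have "{x::real. x < 0} \<times> (UNIV::real set) \<in> sets (M1 \<Otimes>\<^sub>M M2)" using s1 by (intro pair_measureI)
      moreover have "emeasure (M1 \<Otimes>\<^sub>M M2) ({x::real. x < 0} \<times> UNIV) = 0"
        using M2s.emeasure_pair_measure_Times[OF s1 \<open>UNIV \<in> sets M2\<close>] M1_supp by simp
      ultimately show ?thesis by (simp add: null_sets_def)
    qed
    have n2: "UNIV \<times> {y::real. y < 0} \<in> null_sets (M1 \<Otimes>\<^sub>M M2)"
    proof -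
      have "UNIV \<in> sets M1" using sets.top[of M1] sp1 by simp
      then have "(UNIV::real set) \<times> {y::real. y < 0} \<in> sets (M1 \<Otimes>\<^sub>M M2)" using s2 by (intro pair_measureI)
      moreover have "emeasure (M1 \<Otimes>\<^sub>M M2) (UNIV \<times> {y::real. y < 0}) = 0"
        using M2s.emeasure_pair_measure_Times[OF \<open>UNIV \<in> sets M1\<close> s2] M2_supp by simp
      ultimately show ?thesis by (simp add: null_sets_def)
    qed
    have n3: "{(0::real, 0::real)} \<in> null_sets (M1 \<Otimes>\<^sub>M M2)"
    proof -
      have "{0::real} \<times> {0::real} \<in> sets (M1 \<Otimes>\<^sub>M M2)"
        by (rule pair_measureI) (simp_all add: M1_borel M2_borel)
      then show ?thesis using origin_null by (simp add: null_sets_def)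
    qed
    have "AE z in M1 \<Otimes>\<^sub>M M2. z \<notin> {x::real. x < 0} \<times> UNIV" using AE_not_in[OF n1] .
    moreover have "AE z in M1 \<Otimes>\<^sub>M M2. z \<notin> UNIV \<times> {y::real. y < 0}" using AE_not_in[OF n2] .
    moreover have "AE z in M1 \<Otimes>\<^sub>M M2. z \<notin> {(0::real, 0::real)}" using AE_not_in[OF n3] .
    ultimately show ?thesis
    proof eventually_elim
      case (elim z)
      then show ?case by (cases z) (auto simp: not_less)
    qed
  qed

  have xpow: "x = (x powr \<theta>1) ^ k1" if "x \<ge> 0" for x
  proof (cases "x = 0")
    case True then show ?thesis using k1_pos by simp
  next
    case False
    then have xp: "x > 0" using that by simp
    have "(x powr \<theta>1) ^ k1 = (x powr \<theta>1) powr real k1" by (rule powr_realpow[symmetric]) (use xp in simp)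
    also have "\<dots> = x powr (\<theta>1 * real k1)" by (simp add: powr_powr)
    also have "\<theta>1 * real k1 = 1" unfolding \<theta>1_def using k1_pos by simp
    finally show ?thesis using xp by simp
  qed
  have ypow: "y = (y powr \<theta>2) ^ k2" if "y \<ge> 0" for y
  proof (cases "y = 0")
    case True then show ?thesis using k2_pos by simp
  next
    case False
    then have yp: "y > 0" using that by simp
    have "(y powr \<theta>2) ^ k2 = (y powr \<theta>2) powr real k2" by (rule powr_realpow[symmetric]) (use yp in simp)
    also have "\<dots> = y powr (\<theta>2 * real k2)" by (simp add: powr_powr)
    also have "\<theta>2 * real k2 = 1" unfolding \<theta>2_def using k2_pos by simp
    finally show ?thesis using yp by simp
  qed

  define R where "R = P (Suc n) + smult a (P n)"
  define S where "S = monom 1 k1 * R"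
  define N where "N = n + k1 + 1"
  have polyR: "poly R t = poly (P (Suc n)) t + a * poly (P n) t" for t unfolding R_def by simp
  have polyS: "x \<ge> 0 \<Longrightarrow> poly S (x powr \<theta>1) = x * poly R (x powr \<theta>1)" for x
    unfolding S_def using xpow[of x] by (simp add: poly_monom)
  have degR: "degree R \<le> Suc n"
    unfolding R_def using P_deg
    by (metis degree_add_le degree_smult_le le_SucI order.refl order_trans)
  have degS: "degree S \<le> N"
    unfolding S_def N_def using degR degree_mult_le[of "monom (1::real) k1" R]
    by (simp add: degree_monom_eq)
  obtain c where c: "S = (\<Sum>\<alpha>\<le>N. smult (c \<alpha>) (P \<alpha>))"
    using basis_expand[OF P_deg P_monic degS] by blast
  have cB: "B S (Q \<beta>) = c \<beta> * h \<beta>" if "\<beta> \<le> N" for \<beta>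
  proof -
    have "B S (Q \<beta>) = (\<Sum>\<alpha>\<le>N. c \<alpha> * B (P \<alpha>) (Q \<beta>))" unfolding c by (simp add: B_sum1)
    also have "\<dots> = (\<Sum>\<alpha>\<in>{\<beta>}. c \<alpha> * B (P \<alpha>) (Q \<beta>))"
      by (rule sum.mono_neutral_right) (use that borth in auto)
    finally show ?thesis by (simp add: h_def)
  qed
  have etaB: "\<eta> \<beta> = B S (Q \<beta>) / h \<beta>" for \<beta>
  proof -
    have "cauchy_form M1 M2 (\<lambda>x. x * (poly (P (Suc n)) (x powr \<theta>1) + a * poly (P n) (x powr \<theta>1)))
          (\<lambda>y. poly (Q \<beta>) (y powr \<theta>2)) = integral\<^sup>L (M1 \<Otimes>\<^sub>M M2) (F S (Q \<beta>))"
      unfolding cauchy_form_def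
    proof (rule integral_cong_AE)
      show "AE z in M1 \<Otimes>\<^sub>M M2. fst z * (poly (P (Suc n)) (fst z powr \<theta>1) + a * poly (P n) (fst z powr \<theta>1)) *
          poly (Q \<beta>) (snd z powr \<theta>2) / (fst z + snd z) = F S (Q \<beta>) z"
        using AEpos by eventually_elim (simp add: F_def polyS polyR)
    qed (simp_all add: F_def)
    then show ?thesis unfolding \<eta>_def BF[symmetric] h_def B_def by simp
  qed
  have intR: "(\<integral>x. poly R (x powr \<theta>1) \<partial>M1) = 0"
  proof -
    have "(\<integral>x. poly R (x powr \<theta>1) \<partial>M1) = (\<integral>x. poly (P (Suc n)) (x powr \<theta>1) \<partial>M1) + a * (\<integral>x. poly (P n) (x powr \<theta>1) \<partial>M1)"
      unfolding polyR using int1 by simp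
    then show ?thesis unfolding a_def using denom_nz by simp
  qed
  have vanish: "B S (Q \<beta>) = 0" if "\<beta> + k2 < n" for \<beta>
  proof -
    define V where "V = monom 1 k2 * Q \<beta>"
    have degV: "degree V \<le> \<beta> + k2"
      unfolding V_def using degree_mult_le[of "monom (1::real) k2" "Q \<beta>"] Q_deg
      by (simp add: degree_monom_eq)
    obtain d where d: "V = (\<Sum>\<gamma>\<le>\<beta> + k2. smult (d \<gamma>) (Q \<gamma>))"
      using basis_expand[OF Q_deg Q_monic degV] by blast
    have BRV: "B R V = 0"
    proof -
      have "B R V = (\<Sum>\<gamma>\<le>\<beta> + k2. d \<gamma> * B R (Q \<gamma>))" unfolding d by (simp add: B_sum2)
      also have "\<dots> = 0"
      proof (rule sum.neutral, rule ballI)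
        fix \<gamma> assume "\<gamma> \<in> {..\<beta> + k2}"
        then have "\<gamma> < n" using that by simp
        then show "d \<gamma> * B R (Q \<gamma>) = 0" unfolding R_def
          by (simp add: B_add1 B_smult1 borth)
      qed
      finally show ?thesis .
    qed
    define G where "G = (\<lambda>z::real\<times>real. poly R (fst z powr \<theta>1) * poly (Q \<beta>) (snd z powr \<theta>2))"
    have AEG: "AE z in M1 \<Otimes>\<^sub>M M2. F S (Q \<beta>) z + F R V z = G z"
      using AEpos
    proof eventually_elim
      case (elim z)
      then have "F S (Q \<beta>) z + F R V z = (fst z * poly R (fst z powr \<theta>1) * poly (Q \<beta>) (snd z powr \<theta>2)
          + poly R (fst z powr \<theta>1) * (snd z * poly (Q \<beta>) (snd z powr \<theta>2))) / (fst z + snd z)"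
        unfolding F_def V_def using ypow[of "snd z"] by (simp add: polyS poly_monom add_divide_distrib)
      also have "\<dots> = G z" unfolding G_def using elim by (simp add: field_simps)
      finally show ?case .
    qed
    have Gm[measurable]: "G \<in> borel_measurable (M1 \<Otimes>\<^sub>M M2)" unfolding G_def by measurable
    have intG: "integrable (M1 \<Otimes>\<^sub>M M2) G"
      by (rule integrable_cong_AE_imp[OF _ Gm AEG]) (rule Bochner_Integration.integrable_add; rule intF)
    have "B S (Q \<beta>) + B R V = integral\<^sup>L (M1 \<Otimes>\<^sub>M M2) (\<lambda>z. F S (Q \<beta>) z + F R V z)"
      unfolding BF using intF by simp
    also have "\<dots> = integral\<^sup>L (M1 \<Otimes>\<^sub>M M2) G"
      by (rule integral_cong_AE[OF _ Gm AEG]) simp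
    also have "\<dots> = (\<integral>x. (\<integral>y. G (x, y) \<partial>M2) \<partial>M1)"
      using PS.integral_fst'[OF intG] by simp
    also have "\<dots> = (\<integral>x. poly R (x powr \<theta>1) * (\<integral>y. poly (Q \<beta>) (y powr \<theta>2) \<partial>M2) \<partial>M1)"
      unfolding G_def by simp
    also have "\<dots> = 0" using intR by simp
    finally show ?thesis using BRV by simp
  qed
  have c_eta: "\<eta> \<beta> = c \<beta>" if "\<beta> \<le> N" for \<beta>
    using etaB[of \<beta>] cB[OF that] hpos[of \<beta>] by simp
  have c0: "c \<beta> = 0" if "\<beta> < n - k2" for \<beta>
  proof -
    have "\<beta> \<le> N" "\<beta> + k2 < n" using that unfolding N_def by auto
    then show ?thesis using cB vanish hpos[of \<beta>] by (metis mult_eq_0_iff less_irrefl)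
  qed
  show ?thesis
  proof (intro allI impI)
    fix x :: real assume x: "x \<ge> 0"
    have "x * (poly (P (Suc n)) (x powr \<theta>1) + a * poly (P n) (x powr \<theta>1)) = poly S (x powr \<theta>1)"
      using polyS[OF x] polyR by simp
    also have "\<dots> = (\<Sum>\<alpha>\<le>N. c \<alpha> * poly (P \<alpha>) (x powr \<theta>1))" unfolding c by (simp add: poly_sum)
    also have "\<dots> = (\<Sum>\<alpha> = n - k2 .. n + k1 + 1. \<eta> \<alpha> * poly (P \<alpha>) (x powr \<theta>1))"
    proof (rule sum.mono_neutral_cong_right)
      show "{n - k2..n + k1 + 1} \<subseteq> {..N}" unfolding N_def by auto
      show "\<forall>i\<in>{..N} - {n - k2..n + k1 + 1}. c i * poly (P i) (x powr \<theta>1) = 0"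
        using c0 unfolding N_def by auto
      show "\<And>i. i \<in> {n - k2..n + k1 + 1} \<Longrightarrow> c i * poly (P i) (x powr \<theta>1) = \<eta> i * poly (P i) (x powr \<theta>1)"
        using c_eta unfolding N_def by auto
    qed simp
    finally show "x * (poly (P (Suc n)) (x powr \<theta>1) + a * poly (P n) (x powr \<theta>1))
      = (\<Sum>\<alpha> = n - k2 .. n + k1 + 1. \<eta> \<alpha> * poly (P \<alpha>) (x powr \<theta>1))" .
  qed
qed

end
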